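(* Let $\mathcal F$ be a lattice filter and $P$ an implication filter of an MV-algebra $\mathcal L$. Then $J_u(\mathcal F,P)$ is the smallest lattice filter $\mathcal H$ such that $\mathcal F\subseteq\mathcal H$ and $P\subseteq\mathcal K(\mathcal H)$.
   Context: $\mathcal L=(L,\oplus,\lnot,0)$ is an MV-algebra. We write $x\to y=\lnot x\oplus y$ and use the usual lattice order. A lattice filter is a nonempty upward-closed subset closed under $\wedge$. An implication filter is a subset $P\subseteq L$ containing $1$ such that $x\in P$ and $x\to y\in P$ imply $y\in P$. For an implication filter $P$, let $\sim_P$ be the congruence given by $x\sim_P y$ iff $x\to y\in P$ and $y\to x\in P$. Let $\eta_P\colon\mathcal L\to\mathcal L/P$ be the canonical epimorphism, and for $X\subseteq L$ let $X/P=\eta_P[X]$. Define $J_u(\mathcal F,P)=\eta_P^{-1}[\mathcal F/P]$. The kernel of an upward-closed set $\mathcal H$ is $\mathcal K(\mathcal H)=\{z: \forall a\notin\mathcal H,\ z\to a\notin\mathcal H\}$. *)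

theory Defs
  imports Main
begin

definition mv_algebra :: "'a set \<Rightarrow> ('a \<Rightarrow> 'a \<Rightarrow> 'a) \<Rightarrow> ('a \<Rightarrow> 'a) \<Rightarrow> 'a \<Rightarrow> bool" where
  "mv_algebra L pl ng z \<longleftrightarrow>
     z \<in> L \<and>
     (\<forall>x\<in>L. \<forall>y\<in>L. pl x y \<in> L) \<and>
     (\<forall>x\<in>L. ng x \<in> L) \<and>
     (\<forall>x\<in>L. \<forall>y\<in>L. \<forall>w\<in>L. pl x (pl y w) = pl (pl x y) w) \<and>
     (\<forall>x\<in>L. \<forall>y\<in>L. pl x y = pl y x) \<and>
     (\<forall>x\<in>L. pl x z = x) \<and>
     (\<forall>x\<in>L. ng (ng x) = x) \<and>
     (\<forall>x\<in>L. pl x (ng z) = ng z) \<and>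
     (\<forall>x\<in>L. \<forall>y\<in>L. pl (ng (pl (ng x) y)) y = pl (ng (pl (ng y) x)) x)"

definition mv_one :: "('a \<Rightarrow> 'a) \<Rightarrow> 'a \<Rightarrow> 'a" where
  "mv_one ng z = ng z"

definition mv_imp :: "('a \<Rightarrow> 'a \<Rightarrow> 'a) \<Rightarrow> ('a \<Rightarrow> 'a) \<Rightarrow> 'a \<Rightarrow> 'a \<Rightarrow> 'a" where
  "mv_imp pl ng x y = pl (ng x) y"

definition mv_le :: "('a \<Rightarrow> 'a \<Rightarrow> 'a) \<Rightarrow> ('a \<Rightarrow> 'a) \<Rightarrow> 'a \<Rightarrow> 'a \<Rightarrow> 'a \<Rightarrow> bool" where
  "mv_le pl ng z x y \<longleftrightarrow> mv_imp pl ng x y = mv_one ng z"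

text \<open>x \<and> y = x \<odot> (x \<rightarrow> y), where a \<odot> b = \<not>(\<not>a \<oplus> \<not>b).\<close>
definition mv_meet :: "('a \<Rightarrow> 'a \<Rightarrow> 'a) \<Rightarrow> ('a \<Rightarrow> 'a) \<Rightarrow> 'a \<Rightarrow> 'a \<Rightarrow> 'a" where
  "mv_meet pl ng x y = ng (pl (ng x) (ng (mv_imp pl ng x y)))"

definition lattice_filter :: "'a set \<Rightarrow> ('a \<Rightarrow> 'a \<Rightarrow> 'a) \<Rightarrow> ('a \<Rightarrow> 'a) \<Rightarrow> 'a \<Rightarrow> 'a set \<Rightarrow> bool" where
  "lattice_filter L pl ng z F \<longleftrightarrow>
     F \<subseteq> L \<and> F \<noteq> {} \<and>
     (\<forall>x\<in>F. \<forall>y\<in>L. mv_le pl ng z x y \<longrightarrow> y \<in> F) \<and>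
     (\<forall>x\<in>F. \<forall>y\<in>F. mv_meet pl ng x y \<in> F)"

definition implication_filter :: "'a set \<Rightarrow> ('a \<Rightarrow> 'a \<Rightarrow> 'a) \<Rightarrow> ('a \<Rightarrow> 'a) \<Rightarrow> 'a \<Rightarrow> 'a set \<Rightarrow> bool" where
  "implication_filter L pl ng z P \<longleftrightarrow>
     P \<subseteq> L \<and> mv_one ng z \<in> P \<and>
     (\<forall>x\<in>L. \<forall>y\<in>L. x \<in> P \<longrightarrow> mv_imp pl ng x y \<in> P \<longrightarrow> y \<in> P)"

text \<open>The congruence induced by P and the canonical epimorphism onto L/P
  (elements of L/P are the congruence classes).\<close>
definition filter_cong :: "('a \<Rightarrow> 'a \<Rightarrow> 'a) \<Rightarrow> ('a \<Rightarrow> 'a) \<Rightarrow> 'a set \<Rightarrow> 'a \<Rightarrow> 'a \<Rightarrow> bool" where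
  "filter_cong pl ng P x y \<longleftrightarrow> mv_imp pl ng x y \<in> P \<and> mv_imp pl ng y x \<in> P"

definition eta :: "'a set \<Rightarrow> ('a \<Rightarrow> 'a \<Rightarrow> 'a) \<Rightarrow> ('a \<Rightarrow> 'a) \<Rightarrow> 'a set \<Rightarrow> 'a \<Rightarrow> 'a set" where
  "eta L pl ng P x = {y \<in> L. filter_cong pl ng P x y}"

text \<open>J_u(F,P) = eta_P^{-1}[F/P].\<close>
definition J_u :: "'a set \<Rightarrow> ('a \<Rightarrow> 'a \<Rightarrow> 'a) \<Rightarrow> ('a \<Rightarrow> 'a) \<Rightarrow> 'a set \<Rightarrow> 'a set \<Rightarrow> 'a set" where
  "J_u L pl ng F P = {x \<in> L. eta L pl ng P x \<in> eta L pl ng P ` F}"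

definition kernel :: "'a set \<Rightarrow> ('a \<Rightarrow> 'a \<Rightarrow> 'a) \<Rightarrow> ('a \<Rightarrow> 'a) \<Rightarrow> 'a set \<Rightarrow> 'a set" where
  "kernel L pl ng H = {w \<in> L. \<forall>a\<in>L. a \<notin> H \<longrightarrow> mv_imp pl ng w a \<notin> H}"

end

theory Submission
  imports Defs
begin

locale mvA =
  fixes L pl ng z
  assumes mv: "mv_algebra L pl ng z"
begin

lemma zL[simp]: "z \<in> L" using mv unfolding mv_algebra_def by blast
lemma plL[simp]: "x \<in> L \<Longrightarrow> y \<in> L \<Longrightarrow> pl x y \<in> L" using mv unfolding mv_algebra_def by blast
lemma ngL[simp]: "x \<in> L \<Longrightarrow> ng x \<in> L" using mv unfolding mv_algebra_def by blast
lemma assoc: "x \<in> L \<Longrightarrow> y \<in> L \<Longrightarrow> w \<in> L \<Longrightarrow> pl (pl x y) w = pl x (pl y w)"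
  using mv unfolding mv_algebra_def by metis
lemma comm: "x \<in> L \<Longrightarrow> y \<in> L \<Longrightarrow> pl x y = pl y x"
  using mv unfolding mv_algebra_def by metis
lemma lcomm: "x \<in> L \<Longrightarrow> y \<in> L \<Longrightarrow> w \<in> L \<Longrightarrow> pl x (pl y w) = pl y (pl x w)"
  by (metis assoc comm)
lemmas ac = assoc comm lcomm
lemma pz[simp]: "x \<in> L \<Longrightarrow> pl x z = x" using mv unfolding mv_algebra_def by blast
lemma nn[simp]: "x \<in> L \<Longrightarrow> ng (ng x) = x" using mv unfolding mv_algebra_def by blast
lemma p1[simp]: "x \<in> L \<Longrightarrow> pl x (ng z) = ng z" using mv unfolding mv_algebra_def by blast
lemma p1'[simp]: "x \<in> L \<Longrightarrow> pl (ng z) x = ng z" by (metis p1 comm zL ngL)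
lemma ax6: "x \<in> L \<Longrightarrow> y \<in> L \<Longrightarrow> pl (ng (pl (ng x) y)) y = pl (ng (pl (ng y) x)) x"
  using mv unfolding mv_algebra_def by blast
lemma zp[simp]: "x \<in> L \<Longrightarrow> pl z x = x" by (metis pz comm zL)
lemma compl[simp]: "x \<in> L \<Longrightarrow> pl (ng x) x = ng z"
proof -
  assume x: "x \<in> L"
  have "pl (ng (pl (ng x) (ng z))) (ng z) = pl (ng (pl (ng (ng z)) x)) x"
    by (metis ax6 x ngL zL)
  moreover have "pl (ng (pl (ng x) (ng z))) (ng z) = ng z" using x by simp
  moreover have "pl (ng (pl (ng (ng z)) x)) x = pl (ng x) x" using x by (simp only: nn zL zp)
  ultimately show ?thesis by metis
qed
lemma compl'[simp]: "x \<in> L \<Longrightarrow> pl x (ng x) = ng z" by (metis compl comm ngL)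
lemma compl3[simp]: "x \<in> L \<Longrightarrow> y \<in> L \<Longrightarrow> pl (ng x) (pl x y) = ng z"
  by (metis assoc compl ngL p1')
lemma compl4[simp]: "x \<in> L \<Longrightarrow> y \<in> L \<Longrightarrow> pl x (pl (ng x) y) = ng z"
  by (metis assoc compl' ngL p1')

lemma T: "x \<in> L \<Longrightarrow> y \<in> L \<Longrightarrow> w \<in> L \<Longrightarrow>
  pl (ng (pl (ng x) y)) (pl (ng (pl (ng y) w)) (pl (ng x) w)) = ng z"
proof -
  assume L: "x \<in> L" "y \<in> L" "w \<in> L"
  have "pl (ng (pl (ng x) y)) (pl (ng (pl (ng y) w)) (pl (ng x) w))
      = pl (pl (ng (pl (ng x) y)) (ng x)) (pl (ng (pl (ng y) w)) w)"
    using L by (simp only: nn ac plL ngL)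
  also have "\<dots> = pl (pl (ng (pl (ng x) y)) (ng x)) (pl (ng (pl (ng w) y)) y)"
    using L ax6[of y w] by simp
  also have "\<dots> = pl (ng (pl (ng w) y)) (pl (ng (pl (ng x) y)) (pl (ng x) y))"
    using L by (simp only: nn ac plL ngL)
  also have "\<dots> = ng z" using L by simp
  finally show ?thesis .
qed

lemma le_trans: "a \<in> L \<Longrightarrow> b \<in> L \<Longrightarrow> c \<in> L \<Longrightarrow> pl (ng a) b = ng z \<Longrightarrow> pl (ng b) c = ng z
  \<Longrightarrow> pl (ng a) c = ng z"
  using T[of a b c] by simp

lemma antitone: "h \<in> L \<Longrightarrow> f \<in> L \<Longrightarrow> x \<in> L \<Longrightarrow> pl (ng h) f = ng z \<Longrightarrow>
  pl (ng (pl (ng f) x)) (pl (ng h) x) = ng z"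
  using T[of h f x] by simp

lemma glb: "c \<in> L \<Longrightarrow> x \<in> L \<Longrightarrow> y \<in> L \<Longrightarrow> pl (ng c) x = ng z \<Longrightarrow> pl (ng c) y = ng z
  \<Longrightarrow> pl (ng c) (mv_meet pl ng x y) = ng z"
proof -
  assume L: "c \<in> L" "x \<in> L" "y \<in> L" and hx: "pl (ng c) x = ng z" and hy: "pl (ng c) y = ng z"
  define u where "u = pl x (ng y)"
  define d where "d = ng (pl c (ng y))"
  have uL: "u \<in> L" and dL: "d \<in> L" using L by (auto simp: u_def d_def)
  have S: "pl (ng x) (ng (pl (ng x) y)) = pl (ng u) (ng y)"
  proof -
    have "pl (ng x) (ng (pl (ng x) y)) = pl (ng (pl (ng (ng y)) (ng x))) (ng x)"
      using L by (simp only: nn ac plL ngL)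
    also have "\<dots> = pl (ng (pl (ng (ng x)) (ng y))) (ng y)" using ax6[of "ng y" "ng x"] L by simp
    finally show ?thesis using L by (simp add: u_def)
  qed
  have C: "ng c = pl d (ng y)"
  proof -
    have "pl (ng (pl (ng (ng y)) (ng c))) (ng c) = pl (ng (pl (ng (ng c)) (ng y))) (ng y)"
      using ax6[of "ng y" "ng c"] L by simp
    moreover have "pl (ng (ng y)) (ng c) = ng z" using hy L by (simp add: comm)
    ultimately show ?thesis using L by (simp add: d_def)
  qed
  have "pl (ng c) (mv_meet pl ng x y) = pl (ng (pl (ng u) (ng y))) (ng c)"
    unfolding mv_meet_def mv_imp_def S using L uL by (simp only: comm ngL plL)
  also have "\<dots> = pl d (pl (ng (pl (ng u) (ng y))) (ng y))"
    using L uL dL by (simp only: C ac plL ngL)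
  also have "\<dots> = pl d (pl (ng (pl (ng (ng y)) u)) u)" using ax6[of u "ng y"] L uL by simp
  also have "\<dots> = pl (ng (pl (ng (ng y)) u)) (pl x (ng c))"
    using L dL by (simp only: C u_def ac plL ngL)
  also have "\<dots> = ng z" using L uL hx by (simp add: comm)
  finally show ?thesis .
qed

lemma meet_le1: "f \<in> L \<Longrightarrow> g \<in> L \<Longrightarrow> pl (ng (mv_meet pl ng f g)) f = ng z"
proof -
  assume L: "f \<in> L" "g \<in> L"
  have "pl (ng (mv_meet pl ng f g)) f = pl (ng (pl (ng f) g)) (pl (ng f) f)"
    unfolding mv_meet_def mv_imp_def using L by (simp only: nn ac plL ngL)
  thus ?thesis using L by simp
qed

lemma meetL[simp]: "f \<in> L \<Longrightarrow> g \<in> L \<Longrightarrow> mv_meet pl ng f g \<in> L"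
  unfolding mv_meet_def mv_imp_def by simp

lemma meet_le2: "f \<in> L \<Longrightarrow> g \<in> L \<Longrightarrow> pl (ng (mv_meet pl ng f g)) g = ng z"
proof -
  assume L: "f \<in> L" "g \<in> L"
  have "pl (ng f) (ng (pl (ng f) g)) = pl (ng (pl (ng (ng g)) (ng f))) (ng f)"
    using L by (simp only: nn ac plL ngL)
  also have "\<dots> = pl (ng (pl (ng (ng f)) (ng g))) (ng g)" using ax6[of "ng g" "ng f"] L by simp
  finally have e: "pl (ng f) (ng (pl (ng f) g)) = pl (ng (pl f (ng g))) (ng g)" using L by simp
  have "pl (ng (mv_meet pl ng f g)) g = pl (ng (pl f (ng g))) (pl (ng g) g)"
    unfolding mv_meet_def mv_imp_def using L e by (simp only: nn ac plL ngL)
  thus ?thesis using L by simp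
qed

lemma mult_le1: "p \<in> L \<Longrightarrow> q \<in> L \<Longrightarrow> pl (ng (ng (pl (ng p) (ng q)))) p = ng z"
proof -
  assume L: "p \<in> L" "q \<in> L"
  have "pl (ng (ng (pl (ng p) (ng q)))) p = pl (ng q) (pl (ng p) p)"
    using L by (simp only: nn ac plL ngL)
  thus ?thesis using L by simp
qed
lemma mult_le2: "p \<in> L \<Longrightarrow> q \<in> L \<Longrightarrow> pl (ng (ng (pl (ng p) (ng q)))) q = ng z"
proof -
  assume L: "p \<in> L" "q \<in> L"
  have "pl (ng (ng (pl (ng p) (ng q)))) q = pl (ng p) (pl (ng q) q)"
    using L by (simp only: nn ac plL ngL)
  thus ?thesis using L by simp
qed

end

theorem mainTheorem8:
  assumes "mv_algebra L pl ng z"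
    and "lattice_filter L pl ng z F"
    and "implication_filter L pl ng z P"
  shows "lattice_filter L pl ng z (J_u L pl ng F P)
         \<and> F \<subseteq> J_u L pl ng F P
         \<and> P \<subseteq> kernel L pl ng (J_u L pl ng F P)
         \<and> (\<forall>H. lattice_filter L pl ng z H \<and> F \<subseteq> H \<and> P \<subseteq> kernel L pl ng H
                \<longrightarrow> J_u L pl ng F P \<subseteq> H)"
proof -
  interpret mvA L pl ng z using assms(1) by unfold_locales
  have PL: "P \<subseteq> L" and P1: "ng z \<in> P"
    and MP: "\<And>x y. x \<in> L \<Longrightarrow> y \<in> L \<Longrightarrow> x \<in> P \<Longrightarrow> pl (ng x) y \<in> P \<Longrightarrow> y \<in> P"
    using assms(3) unfolding implication_filter_def mv_imp_def mv_one_def by blast+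
  have FL: "F \<subseteq> L" and Fne: "F \<noteq> {}"
    and Fup: "\<And>x y. x \<in> F \<Longrightarrow> y \<in> L \<Longrightarrow> pl (ng x) y = ng z \<Longrightarrow> y \<in> F"
    and Fm: "\<And>x y. x \<in> F \<Longrightarrow> y \<in> F \<Longrightarrow> mv_meet pl ng x y \<in> F"
    using assms(2) unfolding lattice_filter_def mv_le_def mv_imp_def mv_one_def by blast+
  have Pup: "\<And>x y. x \<in> P \<Longrightarrow> y \<in> L \<Longrightarrow> pl (ng x) y = ng z \<Longrightarrow> y \<in> P"
  proof -
    fix x y assume a: "x \<in> P" "y \<in> L" "pl (ng x) y = ng z"
    have xL: "x \<in> L" using a PL by auto
    show "y \<in> P" using MP[OF xL a(2) a(1)] a(3) P1 by simp
  qed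
  have Ptr: "\<And>x y w. x \<in> L \<Longrightarrow> y \<in> L \<Longrightarrow> w \<in> L \<Longrightarrow> pl (ng x) y \<in> P \<Longrightarrow> pl (ng y) w \<in> P
     \<Longrightarrow> pl (ng x) w \<in> P"
  proof -
    fix x y w assume L: "x \<in> L" "y \<in> L" "w \<in> L" and a: "pl (ng x) y \<in> P" "pl (ng y) w \<in> P"
    have hh: "pl (ng (pl (ng y) w)) (pl (ng x) w) \<in> P" using Pup[OF a(1)] T[OF L] L by simp
    show "pl (ng x) w \<in> P" using MP[OF _ _ a(2) hh] L by simp
  qed
  have Pmul: "\<And>p q. p \<in> P \<Longrightarrow> q \<in> P \<Longrightarrow> ng (pl (ng p) (ng q)) \<in> P"
  proof -
    fix p q assume a: "p \<in> P" "q \<in> P"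
    hence L: "p \<in> L" "q \<in> L" using PL by auto
    have "pl (ng p) (pl (ng q) (ng (pl (ng p) (ng q)))) = ng z"
      using L by (simp add: assoc[symmetric])
    hence hh: "pl (ng q) (ng (pl (ng p) (ng q))) \<in> P"
      using Pup[OF a(1)] L by simp
    show "ng (pl (ng p) (ng q)) \<in> P" using MP[OF _ _ a(2) hh] L by simp
  qed
  define J where "J = {x \<in> L. \<exists>f\<in>F. pl (ng f) x \<in> P}"
  have JJ: "J_u L pl ng F P = J"
  proof
    show "J_u L pl ng F P \<subseteq> J"
    proof
      fix x assume "x \<in> J_u L pl ng F P"
      then obtain f where x: "x \<in> L" and f: "f \<in> F" and e: "eta L pl ng P x = eta L pl ng P f"
        unfolding J_u_def by auto
      have "x \<in> eta L pl ng P x" using x P1 unfolding eta_def filter_cong_def mv_imp_def by simp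
      hence "x \<in> eta L pl ng P f" using e by simp
      thus "x \<in> J" using f unfolding J_def eta_def filter_cong_def mv_imp_def by auto
    qed
  next
    show "J \<subseteq> J_u L pl ng F P"
    proof
      fix x assume "x \<in> J"
      then obtain f where x: "x \<in> L" and f: "f \<in> F" and p: "pl (ng f) x \<in> P"
        unfolding J_def by auto
      have fL: "f \<in> L" using f FL by auto
      define u where "u = pl (ng f) x"
      define g where "g = pl (ng u) x"
      have uL: "u \<in> L" and gL: "g \<in> L" using x fL by (auto simp: u_def g_def)
      have "pl (ng f) g = pl (ng u) (pl (ng f) x)" unfolding g_def using x fL uL
        by (intro lcomm) auto
      also have "\<dots> = ng z" using uL by (simp add: u_def[symmetric])
      finally have "pl (ng f) g = ng z" .
      hence gF: "g \<in> F" using Fup f gL by blast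
      have "pl (ng x) g = pl (ng u) (pl (ng x) x)" unfolding g_def using x fL uL
        by (intro lcomm) auto
      hence xg: "pl (ng x) g = ng z" using x uL by simp
      have gx: "pl (ng g) x = u"
      proof -
        have "pl (ng g) x = pl (ng (pl (ng x) u)) u" unfolding g_def using ax6[of u x] x uL by simp
        moreover have "pl (ng x) u = ng z"
        proof -
          have "pl (ng x) u = pl (ng f) (pl (ng x) x)" unfolding u_def using x fL
            by (intro lcomm) auto
          thus ?thesis using x fL by simp
        qed
        ultimately show ?thesis using uL by simp
      qed
      have xg': "pl (ng x) g \<in> P" and gx': "pl (ng g) x \<in> P" using xg gx P1 p u_def by auto
      have "eta L pl ng P x = eta L pl ng P g"
        unfolding eta_def filter_cong_def mv_imp_def
      proof (rule Collect_cong, rule conj_cong[OF refl])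
        fix y assume yL: "y \<in> L"
        show "(pl (ng x) y \<in> P \<and> pl (ng y) x \<in> P) = (pl (ng g) y \<in> P \<and> pl (ng y) g \<in> P)"
          using Ptr[OF gL x yL gx'] Ptr[OF yL x gL _ xg'] Ptr[OF x gL yL xg'] Ptr[OF yL gL x _ gx'] by blast
      qed
      thus "x \<in> J_u L pl ng F P" unfolding J_u_def using x gF by auto
    qed
  qed
  have FJ: "F \<subseteq> J"
  proof
    fix x assume x: "x \<in> F"
    hence xL: "x \<in> L" using FL by auto
    hence "pl (ng x) x \<in> P" using P1 by simp
    thus "x \<in> J" unfolding J_def using x xL by blast
  qed
  have JL: "J \<subseteq> L" unfolding J_def by auto
  have LF: "lattice_filter L pl ng z J"
    unfolding lattice_filter_def mv_le_def mv_imp_def mv_one_def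
  proof (intro conjI ballI impI)
    show "J \<subseteq> L" by fact
    show "J \<noteq> {}" using FJ Fne by auto
  next
    fix x y assume x: "x \<in> J" and y: "y \<in> L" and le: "pl (ng x) y = ng z"
    then obtain f where f: "f \<in> F" "pl (ng f) x \<in> P" and xL: "x \<in> L" unfolding J_def by auto
    have "pl (ng f) y \<in> P" using Ptr[OF _ xL y f(2)] f FL le P1 by auto
    thus "y \<in> J" unfolding J_def using f y by auto
  next
    fix x y assume x: "x \<in> J" and y: "y \<in> J"
    then obtain f g where f: "f \<in> F" "pl (ng f) x \<in> P" and g: "g \<in> F" "pl (ng g) y \<in> P"
      and xL: "x \<in> L" and yL: "y \<in> L" unfolding J_def by auto
    have fL: "f \<in> L" and gL: "g \<in> L" using f g FL by auto
    define h where "h = mv_meet pl ng f g"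
    define p where "p = ng (pl (ng (pl (ng f) x)) (ng (pl (ng g) y)))"
    have hF: "h \<in> F" using Fm f g h_def by auto
    have hL: "h \<in> L" using fL gL h_def by simp
    have pP: "p \<in> P" unfolding p_def using Pmul f g by auto
    have pL: "p \<in> L" using pP PL by auto
    have m1: "pl (ng p) (pl (ng f) x) = ng z"
      unfolding p_def using fL xL gL yL by (intro mult_le1) auto
    have m2: "pl (ng p) (pl (ng g) y) = ng z"
      unfolding p_def using fL xL gL yL by (intro mult_le2) auto
    have a1: "pl (ng (pl (ng f) x)) (pl (ng h) x) = ng z"
      using antitone[OF hL fL xL meet_le1[OF fL gL, folded h_def]] .
    have a2: "pl (ng (pl (ng g) y)) (pl (ng h) y) = ng z"
      using antitone[OF hL gL yL meet_le2[OF fL gL, folded h_def]] .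
    have c1: "pl (ng p) (pl (ng h) x) = ng z"
      by (rule le_trans[OF pL _ _ m1 a1]) (use fL xL hL in auto)
    have c2: "pl (ng p) (pl (ng h) y) = ng z"
      by (rule le_trans[OF pL _ _ m2 a2]) (use gL yL hL in auto)
    define c where "c = ng (pl (ng p) (ng h))"
    have cL: "c \<in> L" using pL hL c_def by simp
    have "pl (ng c) (mv_meet pl ng x y) = ng z"
      using glb[OF cL xL yL] c1 c2 pL hL xL yL unfolding c_def by (simp add: assoc)
    hence "pl (ng p) (pl (ng h) (mv_meet pl ng x y)) = ng z"
      using pL hL xL yL unfolding c_def by (simp add: assoc)
    hence "pl (ng h) (mv_meet pl ng x y) \<in> P" using Pup[OF pP] hL xL yL by simp
    thus "mv_meet pl ng x y \<in> J" unfolding J_def using hF xL yL by auto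
  qed
  have KJ: "P \<subseteq> kernel L pl ng J"
  proof
    fix w assume w: "w \<in> P"
    hence wL: "w \<in> L" using PL by auto
    show "w \<in> kernel L pl ng J" unfolding kernel_def mv_imp_def
    proof (intro CollectI conjI ballI impI wL)
      fix a assume aL: "a \<in> L" and na: "a \<notin> J"
      show "pl (ng w) a \<notin> J"
      proof
        assume "pl (ng w) a \<in> J"
        then obtain f where f: "f \<in> F" "pl (ng f) (pl (ng w) a) \<in> P" unfolding J_def by auto
        have fL: "f \<in> L" using f FL by auto
        have hh: "pl (ng w) (pl (ng f) a) \<in> P" using f(2) fL wL aL by (simp add: lcomm)
        have "pl (ng f) a \<in> P" using MP[OF wL _ w hh] fL aL by simp
        thus False using na f aL unfolding J_def by auto
      qed
    qed
  qed
  have MIN: "\<forall>H. lattice_filter L pl ng z H \<and> F \<subseteq> H \<and> P \<subseteq> kernel L pl ng H \<longrightarrow> J \<subseteq> H"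
  proof (intro allI impI subsetI)
    fix H x assume H: "lattice_filter L pl ng z H \<and> F \<subseteq> H \<and> P \<subseteq> kernel L pl ng H" and x: "x \<in> J"
    then obtain f where f: "f \<in> F" "pl (ng f) x \<in> P" and xL: "x \<in> L" unfolding J_def by auto
    have fL: "f \<in> L" using f FL by auto
    have Hup: "\<And>a b. a \<in> H \<Longrightarrow> b \<in> L \<Longrightarrow> pl (ng a) b = ng z \<Longrightarrow> b \<in> H"
      using H unfolding lattice_filter_def mv_le_def mv_imp_def mv_one_def by blast
    show "x \<in> H"
    proof (rule ccontr)
      assume nx: "x \<notin> H"
      have "pl (ng f) x \<in> kernel L pl ng H" using H f by auto
      hence nH: "pl (ng (pl (ng f) x)) x \<notin> H" using nx xL unfolding kernel_def mv_imp_def by auto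
      have "pl (ng f) (pl (ng (pl (ng f) x)) x) = pl (ng (pl (ng f) x)) (pl (ng f) x)"
        using fL xL by (intro lcomm) auto
      hence "pl (ng f) (pl (ng (pl (ng f) x)) x) = ng z" using fL xL by simp
      hence "pl (ng (pl (ng f) x)) x \<in> H" using Hup[of f] H f fL xL by auto
      thus False using nH by simp
    qed
  qed
  show ?thesis using JJ LF FJ KJ MIN by simp
qed

end
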